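(* Let $d,N,m\ge1$ be integers and let $x_1,\dots,x_m$ be independent random variables uniformly distributed on $\Gamma_N^d$. Let $\mu_m=\frac1m\sum_{\nu=1}^m\delta_{x_\nu}$ and let $h\ge1$. Then the event $$\max_{u\in\Gamma_N^d\setminus\{0\}}|\widehat{\mu_m}(Nu)|\le\frac{4\log^{1/2}(8N^{d+h})}{m^{1/2}}$$ has probability at least $1-N^{-h}$.
   Context: $\Gamma_N=\{k/N:k=0,\dots,N-1\}\subset\mathbb T=\mathbb R/\mathbb Z$ and $\Gamma_N^d$ is its $d$-fold product. For $u\in\Gamma_N^d$, $\widehat{\mu_m}(Nu)=\frac1m\sum_{j=1}^m e^{-2\pi iN\langle u,x_j\rangle}$ (with $\mathbb T$ identified with $[0,1)$). *)

theory Defs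
  imports "HOL-Probability.Probability"
begin

text \<open>A point k/N of Gamma_N^d is represented by its integer numerator vector
  k : {0..<d} -> {0..<N} (extensional function, undefined outside {..<d}).\<close>
definition Gamma :: "nat \<Rightarrow> nat \<Rightarrow> (nat \<Rightarrow> nat) set" where
  "Gamma N d = PiE {..<d} (\<lambda>_. {..<N})"

definition coord :: "nat \<Rightarrow> (nat \<Rightarrow> nat) \<Rightarrow> nat \<Rightarrow> real" where
  "coord N k i = real (k i) / real N"

definition emp_fourier ::
  "nat \<Rightarrow> nat \<Rightarrow> nat \<Rightarrow> (nat \<Rightarrow> (nat \<Rightarrow> nat)) \<Rightarrow> (nat \<Rightarrow> nat) \<Rightarrow> complex" where
  "emp_fourier d N m xs u =
     (1 / of_nat m) * (\<Sum>j<m. cis (- 2 * pi * real N *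
         (\<Sum>i<d. coord N u i * coord N (xs j) i)))"

definition samples :: "nat \<Rightarrow> nat \<Rightarrow> nat \<Rightarrow> (nat \<Rightarrow> (nat \<Rightarrow> nat)) pmf" where
  "samples d N m = Pi_pmf {..<m} undefined (\<lambda>_. pmf_of_set (Gamma N d))"

end

theory Submission
  imports Defs
begin

lemma cis_sum: "finite A \<Longrightarrow> cis (sum f A) = (\<Prod>x\<in>A. cis (f x))"
  by (induction A rule: finite_induct) (auto simp: cis_mult[symmetric])

lemma root_sum_zero:
  fixes a N :: nat
  assumes "0 < a" "a < N"
  shows "(\<Sum>t<N. cis (2 * pi * real a * real t / real N)) = 0"
proof -
  define w where "w = cis (2 * pi * real a / real N)"
  have pw: "w ^ t = cis (2 * pi * real a * real t / real N)" for t
    unfolding w_def by (subst Complex.DeMoivre) (simp add: field_simps)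
  have "w ^ N = cis (2 * pi * real a)" using assms unfolding pw by simp
  also have "\<dots> = 1" by (rule cis_multiple_2pi) simp
  finally have "w ^ N = 1" .
  moreover have "w \<noteq> 1"
  proof
    assume "w = 1"
    hence "cos (2 * pi * (real a / real N)) = 1" unfolding w_def
      by (metis cis.sel(1) one_complex.sel(1) times_divide_eq_right)
    then obtain n :: int where "real a / real N = of_int n"
    proof -
      from \<open>cos _ = 1\<close> obtain x :: int where "2 * pi * (real a / real N) = real_of_int x * 2 * pi"
        by (auto simp: cos_one_2pi_int)
      hence "(2 * pi) * (real a / real N) = (2 * pi) * of_int x" by (simp add: mult_ac)
      hence "real a / real N = of_int x" using pi_gt_zero by (metis mult_left_cancel pi_neq_zero mult_eq_0_iff zero_neq_numeral)
      thus ?thesis using that by blast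
    qed
    moreover have "0 < real a / real N" "real a / real N < 1" using assms by auto
    ultimately have "0 < n" "n < 1" by simp_all
    thus False by simp
  qed
  ultimately have "(\<Sum>t<N. w ^ t) = 0" by (simp add: geometric_sum)
  thus ?thesis by (simp add: pw)
qed

definition phase :: "nat \<Rightarrow> nat \<Rightarrow> (nat \<Rightarrow> nat) \<Rightarrow> (nat \<Rightarrow> nat) \<Rightarrow> real" where
  "phase d N u k = 2 * pi * real N * (\<Sum>i<d. coord N u i * coord N k i)"

lemma gamma_sum_zero:
  assumes u: "u \<in> Gamma N d" and i0: "i0 < d" "u i0 \<noteq> 0"
  shows "(\<Sum>k\<in>Gamma N d. cis (phase d N u k)) = 0"
proof -
  have ui0: "u i0 < N" using u i0 by (auto simp: Gamma_def PiE_iff)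
  hence N0: "N > 0" by simp
  have ph: "phase d N u k = (\<Sum>i<d. 2 * pi * real (u i) * real (k i) / real N)" for k
    unfolding phase_def coord_def sum_distrib_left
    by (intro sum.cong refl) (use N0 in \<open>simp add: field_simps power2_eq_square\<close>)
  have "(\<Sum>k\<in>Gamma N d. cis (phase d N u k))
      = (\<Sum>k\<in>Gamma N d. \<Prod>i<d. cis (2 * pi * real (u i) * real (k i) / real N))"
    by (simp add: ph cis_sum)
  also have "\<dots> = (\<Prod>i<d. \<Sum>t<N. cis (2 * pi * real (u i) * real t / real N))"
    unfolding Gamma_def by (rule prod_sum_PiE[symmetric]) auto
  also have "\<dots> = 0"
    using i0 ui0 by (intro prod_zero bexI[of _ i0] root_sum_zero) auto
  finally show ?thesis .
qed

lemma Gamma_fin: "finite (Gamma N d)" unfolding Gamma_def by (intro finite_PiE) auto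
lemma Gamma_ne: "N \<ge> 1 \<Longrightarrow> Gamma N d \<noteq> {}" unfolding Gamma_def by (auto simp: PiE_eq_empty_iff lessThan_empty_iff)

lemma hoeff:
  fixes g :: "(nat \<Rightarrow> nat) \<Rightarrow> real"
  assumes N: "N \<ge> 1" and m: "m \<ge> 1" and gb: "\<And>k. \<bar>g k\<bar> \<le> 1"
    and g0: "(\<Sum>k\<in>Gamma N d. g k) = 0" and e: "\<epsilon> \<ge> 0"
  shows "measure_pmf.prob (samples d N m) {xs. \<bar>\<Sum>j<m. g (xs j)\<bar> \<ge> \<epsilon>}
           \<le> 2 * exp (- (\<epsilon>\<^sup>2) / (2 * real m))"
proof -
  have E0: "measure_pmf.expectation (samples d N m) (\<lambda>xs. g (xs j)) = 0" if "j < m" for j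
  proof -
    have "measure_pmf.expectation (samples d N m) (\<lambda>xs. g (xs j))
        = measure_pmf.expectation (map_pmf (\<lambda>xs. xs j) (samples d N m)) g"
      by (simp add: integral_map_pmf)
    also have "map_pmf (\<lambda>xs. xs j) (samples d N m) = pmf_of_set (Gamma N d)"
      unfolding samples_def using that by (subst Pi_pmf_component) auto
    also have "measure_pmf.expectation (pmf_of_set (Gamma N d)) g = 0"
      using Gamma_fin Gamma_ne[OF N] g0 by (simp add: integral_pmf_of_set)
    finally show ?thesis .
  qed
  interpret H: Hoeffding_ineq "measure_pmf (samples d N m)" "{..<m}" "\<lambda>j xs. g (xs j)"
      "\<lambda>_. -1" "\<lambda>_. 1" 0
  proof unfold_locales
    show "prob_space.indep_vars (measure_pmf (samples d N m)) (\<lambda>_. borel) (\<lambda>j xs. g (xs j)) {..<m}"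
      unfolding samples_def
      by (intro prob_space.indep_vars_compose2[OF _ indep_vars_Pi_pmf])
         (auto simp: measure_pmf.prob_space_axioms)
  next
    fix i assume "i \<in> {..<m}"
    show "AE x in measure_pmf (samples d N m). g (x i) \<in> {- 1..1}"
      using gb by (auto simp: abs_le_iff)
  next
  next
    show "finite {..<m}" by simp
  next
    show "0 \<equiv> \<Sum>i<m. measure_pmf.expectation (samples d N m) (\<lambda>xs. g (xs i))"
      using E0 by simp
  qed
  have "measure_pmf.prob (samples d N m) {x \<in> space (measure_pmf (samples d N m)). \<bar>(\<Sum>i\<in>{..<m}. g (x i)) - 0\<bar> \<ge> \<epsilon>}
     \<le> 2 * exp (-2 * \<epsilon>\<^sup>2 / (\<Sum>i\<in>{..<m}. (1 - -1)\<^sup>2))"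
    by (rule H.Hoeffding_ineq_abs_ge[OF e]) (use m in simp)
  moreover have "-2 * \<epsilon>\<^sup>2 / (\<Sum>i\<in>{..<m}. (1 - -1::real)\<^sup>2) = - (\<epsilon>\<^sup>2) / (2 * real m)"
    using m by (simp add: field_simps)
  ultimately show ?thesis by simp
qed

lemma per_u:
  assumes N: "N \<ge> 1" and m: "m \<ge> 1" and u: "u \<in> Gamma N d" "i0 < d" "u i0 \<noteq> 0"
    and T: "T \<ge> 0"
  shows "measure_pmf.prob (samples d N m) {xs. cmod (emp_fourier d N m xs u) > T}
           \<le> 4 * exp (- (real m * T\<^sup>2 / 4))"
proof -
  define \<epsilon> where "\<epsilon> = real m * T / sqrt 2"
  have e0: "\<epsilon> \<ge> 0" using T by (simp add: \<epsilon>_def)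
  have e2: "\<epsilon>\<^sup>2 = (real m * T)\<^sup>2 / 2" unfolding \<epsilon>_def by (simp add: power_divide)
  define c where "c xs = (\<Sum>j<m. cos (phase d N u (xs j)))" for xs
  define s where "s xs = (\<Sum>j<m. sin (phase d N u (xs j)))" for xs
  have S0: "(\<Sum>k\<in>Gamma N d. cis (phase d N u k)) = 0" by (rule gamma_sum_zero[OF u])
  have c0: "(\<Sum>k\<in>Gamma N d. cos (phase d N u k)) = 0"
    using arg_cong[OF S0, of Re] by (simp add: Re_sum)
  have s0: "(\<Sum>k\<in>Gamma N d. sin (phase d N u k)) = 0"
    using arg_cong[OF S0, of Im] by (simp add: Im_sum)
  have Pc: "measure_pmf.prob (samples d N m) {xs. \<bar>c xs\<bar> \<ge> \<epsilon>} \<le> 2 * exp (- (\<epsilon>\<^sup>2) / (2 * real m))"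
    unfolding c_def by (rule hoeff[OF N m _ c0 e0]) simp
  have Ps: "measure_pmf.prob (samples d N m) {xs. \<bar>s xs\<bar> \<ge> \<epsilon>} \<le> 2 * exp (- (\<epsilon>\<^sup>2) / (2 * real m))"
    unfolding s_def by (rule hoeff[OF N m _ s0 e0]) simp
  have sub: "{xs. cmod (emp_fourier d N m xs u) > T} \<subseteq> {xs. \<bar>c xs\<bar> \<ge> \<epsilon>} \<union> {xs. \<bar>s xs\<bar> \<ge> \<epsilon>}"
  proof
    fix xs assume "xs \<in> {xs. cmod (emp_fourier d N m xs u) > T}"
    hence gt: "cmod (emp_fourier d N m xs u) > T" by simp
    define z where "z = (\<Sum>j<m. cis (- phase d N u (xs j)))"
    have ef: "emp_fourier d N m xs u = z / of_nat m"
      unfolding emp_fourier_def z_def phase_def by (simp add: field_simps)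
    have Rz: "Re z = c xs" unfolding z_def c_def by (simp add: Re_sum)
    have Iz: "Im z = - s xs" unfolding z_def s_def by (simp add: Im_sum sum_negf)
    have "cmod z > real m * T" using gt m unfolding ef by (simp add: norm_divide field_simps)
    hence "(cmod z)\<^sup>2 > (real m * T)\<^sup>2" using T by (intro power_strict_mono) auto
    hence "(c xs)\<^sup>2 + (s xs)\<^sup>2 > 2 * \<epsilon>\<^sup>2" unfolding cmod_power2 Rz Iz e2 by simp
    hence "(c xs)\<^sup>2 \<ge> \<epsilon>\<^sup>2 \<or> (s xs)\<^sup>2 \<ge> \<epsilon>\<^sup>2" by linarith
    hence "\<bar>c xs\<bar> \<ge> \<epsilon> \<or> \<bar>s xs\<bar> \<ge> \<epsilon>" using e0
      by (metis abs_le_square_iff abs_of_nonneg)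
    thus "xs \<in> {xs. \<bar>c xs\<bar> \<ge> \<epsilon>} \<union> {xs. \<bar>s xs\<bar> \<ge> \<epsilon>}" by simp
  qed
  have "measure_pmf.prob (samples d N m) {xs. cmod (emp_fourier d N m xs u) > T}
      \<le> measure_pmf.prob (samples d N m) ({xs. \<bar>c xs\<bar> \<ge> \<epsilon>} \<union> {xs. \<bar>s xs\<bar> \<ge> \<epsilon>})"
    by (rule measure_pmf.finite_measure_mono[OF sub]) simp
  also have "\<dots> \<le> measure_pmf.prob (samples d N m) {xs. \<bar>c xs\<bar> \<ge> \<epsilon>}
      + measure_pmf.prob (samples d N m) {xs. \<bar>s xs\<bar> \<ge> \<epsilon>}"
    by (rule measure_subadditive) (simp_all add: measure_pmf.emeasure_eq_measure)
  also have "\<dots> \<le> 4 * exp (- (\<epsilon>\<^sup>2) / (2 * real m))" using Pc Ps by simp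
  also have "- (\<epsilon>\<^sup>2) / (2 * real m) = - (real m * T\<^sup>2 / 4)"
    using m unfolding e2 by (simp add: field_simps power2_eq_square)
  finally show ?thesis .
qed

theorem lemma3p1:
  fixes d N m :: nat and h :: real
  assumes "d \<ge> 1" "N \<ge> 1" "m \<ge> 1" "h \<ge> 1"
  shows "measure_pmf.prob (samples d N m)
           {xs. \<forall>u \<in> Gamma N d. (\<exists>i<d. u i \<noteq> 0) \<longrightarrow>
                  cmod (emp_fourier d N m xs u)
                    \<le> 4 * sqrt (ln (8 * real N powr (real d + h))) / sqrt (real m)}
         \<ge> 1 - real N powr (- h)"
proof -
  note N = assms(2) and m = assms(3)
  define P where "P = real N powr (real d + h)"
  define L where "L = ln (8 * P)"
  define T where "T = 4 * sqrt L / sqrt (real m)"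
  define U where "U = {u \<in> Gamma N d. \<exists>i<d. u i \<noteq> 0}"
  define B where "B u = {xs. cmod (emp_fourier d N m xs u) > T}" for u
  have P1: "P \<ge> 1" unfolding P_def using N assms(4) by (simp add: ge_one_powr_ge_zero)
  have L0: "L \<ge> 0" unfolding L_def using P1 by simp
  have T0: "T \<ge> 0" unfolding T_def using L0 by simp
  have T2: "real m * T\<^sup>2 / 4 = 4 * L"
    unfolding T_def using L0 m by (simp add: power_divide power_mult_distrib)
  have finU: "finite U" unfolding U_def using Gamma_fin by simp
  have cardU: "real (card U) \<le> real N ^ d"
  proof -
    have "card U \<le> card (Gamma N d)" unfolding U_def using Gamma_fin by (intro card_mono) auto
    also have "card (Gamma N d) = N ^ d" unfolding Gamma_def by (simp add: card_PiE)
    finally show ?thesis by (metis of_nat_le_iff of_nat_power)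
  qed
  have PB: "measure_pmf.prob (samples d N m) (B u) \<le> 1 / (2 * P)" if uU: "u \<in> U" for u
  proof -
    obtain i0 where "u \<in> Gamma N d" "i0 < d" "u i0 \<noteq> 0" using uU unfolding U_def by auto
    hence "measure_pmf.prob (samples d N m) (B u) \<le> 4 * exp (- (real m * T\<^sup>2 / 4))"
      unfolding B_def by (rule per_u[OF N m _ _ _ T0])
    also have "\<dots> \<le> 4 * exp (- L)" unfolding T2 using L0 by simp
    also have "exp (- L) = 1 / (8 * P)" unfolding L_def using P1 by (simp add: exp_minus inverse_eq_divide)
    finally show ?thesis by simp
  qed
  have "measure_pmf.prob (samples d N m) (\<Union>u\<in>U. B u) \<le> (\<Sum>u\<in>U. measure_pmf.prob (samples d N m) (B u))"
    by (rule measure_pmf.finite_measure_subadditive_finite[OF finU]) simp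
  also have "\<dots> \<le> (\<Sum>u\<in>U. 1 / (2 * P))" by (rule sum_mono) (rule PB)
  also have "\<dots> = real (card U) / (2 * P)" by simp
  also have "\<dots> \<le> real N ^ d / (2 * P)" using cardU P1 by (simp add: divide_right_mono)
  also have "\<dots> \<le> real N powr (- h)"
  proof -
    have "real N ^ d = real N powr real d" using N by (simp add: powr_realpow)
    hence "real N ^ d / P = real N powr (- h)" unfolding P_def using N
      by (simp add: powr_add powr_minus divide_simps)
    moreover have "real N powr (- h) \<ge> 0" by simp
    ultimately show ?thesis using P1 by (simp add: field_simps)
  qed
  finally have bad: "measure_pmf.prob (samples d N m) (\<Union>u\<in>U. B u) \<le> real N powr (- h)" .
  have eq: "{xs. \<forall>u \<in> Gamma N d. (\<exists>i<d. u i \<noteq> 0) \<longrightarrow>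
                  cmod (emp_fourier d N m xs u)
                    \<le> 4 * sqrt (ln (8 * real N powr (real d + h))) / sqrt (real m)}
        = UNIV - (\<Union>u\<in>U. B u)"
    unfolding U_def B_def T_def L_def P_def by (auto simp: not_less)
  have "measure_pmf.prob (samples d N m) (UNIV - (\<Union>u\<in>U. B u))
        = 1 - measure_pmf.prob (samples d N m) (\<Union>u\<in>U. B u)"
    using measure_pmf.prob_compl[of "\<Union>u\<in>U. B u" "samples d N m"] by simp
  hence "1 - real N powr (- h) \<le> measure_pmf.prob (samples d N m) (UNIV - (\<Union>u\<in>U. B u))"
    using bad by linarith
  thus ?thesis by (simp only: eq)
qed
end
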